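(* Let $\alpha,\beta$ be cylindric partitions on $\mathcal C_{k,n}$ and $m$ a nonnegative integer. Let $M$ be the set of cylindric partitions $\mu$ with $\mu\subseteq\alpha$, $\mu\subseteq\beta$ and such that $\alpha/\mu$ contains exactly $m$ boxes, and let $\Lambda$ be the set of cylindric partitions $\lambda$ with $\alpha\subseteq\lambda$, $\beta\subseteq\lambda$ and such that $\lambda/\beta$ contains exactly $m$ boxes. Then \[ \sum_{\mu\in M}f_{\alpha/\mu}\,f_{\beta/\mu}=\sum_{\lambda\in\Lambda}f_{\lambda/\alpha}\,f_{\lambda/\beta}. \]
   Context: Fix integers $n>k\ge 1$. A cylindric partition is a weakly decreasing sequence $(\lambda_m)_{m\in\mathbb Z}$ of integers with $\lambda_m=\lambda_{m+k}+n-k$ for all $m$. A point $(x,y)\in\mathbb Z^2$ lies in $\lambda$ if $y\le\lambda_x$. A box is an equivalence class of points modulo translation by integer multiples of $(-k,n-k)$; $\pi$ is the projection; a box lies in $\lambda$ iff its representatives do. $\mu\subseteq\lambda$ means $\mu_m\le\lambda_m$ for all $m$; the boxes of $\lambda/\mu$ are the (finitely many) boxes in $\lambda$ not in $\mu$. A semistandard cylindric tableau of shape $\lambda/\mu$ with values in a totally ordered set is a map $R$ from the boxes of $\lambda/\mu$ to it such that $R(\pi(x,y_1))\le R(\pi(x,y_2))$ whenever $(x,y_1),(x,y_2)$ lie in $\lambda$ but not in $\mu$ and $y_1<y_2$, and $R(\pi(x_1,y))<R(\pi(x_2,y))$ whenever $(x_1,y),(x_2,y)$ lie in $\lambda$ but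 not in $\mu$ and $x_1<x_2$. A standard cylindric tableau is a semistandard cylindric tableau with values in $\{1,\dots,N\}$ for some $N\ge0$ in which each of $1,\dots,N$ occurs in exactly one box. $f_{\lambda/\mu}$ denotes the number of standard cylindric tableaux of shape $\lambda/\mu$. *)

theory Defs
  imports Main "HOL-Library.FuncSet"
begin

definition cyl_partition :: "nat \<Rightarrow> nat \<Rightarrow> (int \<Rightarrow> int) \<Rightarrow> bool" where
  "cyl_partition k n lam \<longleftrightarrow>
     (\<forall>m. lam (m + 1) \<le> lam m) \<and> (\<forall>m. lam m = lam (m + int k) + (int n - int k))"

definition in_part :: "(int \<Rightarrow> int) \<Rightarrow> int \<times> int \<Rightarrow> bool" where
  "in_part lam p \<longleftrightarrow> snd p \<le> lam (fst p)"

definition cyl_subseteq :: "(int \<Rightarrow> int) \<Rightarrow> (int \<Rightarrow> int) \<Rightarrow> bool" where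
  "cyl_subseteq mu lam \<longleftrightarrow> (\<forall>m. mu m \<le> lam m)"

definition box :: "nat \<Rightarrow> nat \<Rightarrow> int \<times> int \<Rightarrow> (int \<times> int) set" where
  "box k n p = {(fst p - j * int k, snd p + j * (int n - int k)) | j. True}"

definition skew_points :: "(int \<Rightarrow> int) \<Rightarrow> (int \<Rightarrow> int) \<Rightarrow> (int \<times> int) set" where
  "skew_points lam mu = {p. in_part lam p \<and> \<not> in_part mu p}"

definition skew_boxes :: "nat \<Rightarrow> nat \<Rightarrow> (int \<Rightarrow> int) \<Rightarrow> (int \<Rightarrow> int) \<Rightarrow> (int \<times> int) set set" where
  "skew_boxes k n lam mu = box k n ` skew_points lam mu"

definition semistandard ::
  "nat \<Rightarrow> nat \<Rightarrow> (int \<Rightarrow> int) \<Rightarrow> (int \<Rightarrow> int) \<Rightarrow> ((int \<times> int) set \<Rightarrow> 'b::linorder) \<Rightarrow> bool" where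
  "semistandard k n lam mu R \<longleftrightarrow>
     (\<forall>x y1 y2. (x, y1) \<in> skew_points lam mu \<and> (x, y2) \<in> skew_points lam mu \<and> y1 < y2
         \<longrightarrow> R (box k n (x, y1)) \<le> R (box k n (x, y2))) \<and>
     (\<forall>x1 x2 y. (x1, y) \<in> skew_points lam mu \<and> (x2, y) \<in> skew_points lam mu \<and> x1 < x2
         \<longrightarrow> R (box k n (x1, y)) < R (box k n (x2, y)))"

definition standard_tableau ::
  "nat \<Rightarrow> nat \<Rightarrow> (int \<Rightarrow> int) \<Rightarrow> (int \<Rightarrow> int) \<Rightarrow> ((int \<times> int) set \<Rightarrow> nat) \<Rightarrow> bool" where
  "standard_tableau k n lam mu R \<longleftrightarrow>
     (\<exists>N::nat. R \<in> skew_boxes k n lam mu \<rightarrow>\<^sub>E {1..N} \<and>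
               bij_betw R (skew_boxes k n lam mu) {1..N}) \<and>
     semistandard k n lam mu R"

definition num_syt :: "nat \<Rightarrow> nat \<Rightarrow> (int \<Rightarrow> int) \<Rightarrow> (int \<Rightarrow> int) \<Rightarrow> nat" where
  "num_syt k n lam mu = card {R. standard_tableau k n lam mu R}"

end

theory Submission
  imports Defs
begin

locale cylk =
  fixes k n :: nat
  assumes k1: "1 \<le> k" and kn: "k < n"
begin

abbreviation cyl where "cyl \<equiv> cyl_partition k n"
abbreviation c :: int where "c \<equiv> int n - int k"

lemma kpos: "(0::int) < int k" using k1 by simp
lemma cpos: "0 < c" using kn by simp

lemma cyl_mono1: "cyl l \<Longrightarrow> l (x+1) \<le> l x"
  unfolding cyl_partition_def by blast
lemma cyl_per: "cyl l \<Longrightarrow> l x = l (x + int k) + c"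
  unfolding cyl_partition_def by blast

lemma cyl_shift_nat: "cyl l \<Longrightarrow> l (x + int j * int k) = l x - int j * c"
proof (induction j arbitrary: x)
  case 0 then show ?case by simp
next
  case (Suc j)
  have "l (x + int (Suc j) * int k) = l ((x + int k) + int j * int k)"
    by (simp add: algebra_simps)
  also have "\<dots> = l (x + int k) - int j * c" using Suc by blast
  also have "\<dots> = l x - c - int j * c" using cyl_per[OF Suc.prems, of x] by simp
  finally show ?case by (simp add: algebra_simps)
qed

lemma cyl_shift: "cyl l \<Longrightarrow> l (x + j * int k) = l x - j * c"
proof (cases "j \<ge> 0")
  case True
  assume "cyl l"
  then show ?thesis using cyl_shift_nat[of l x "nat j"] True by simp
next
  case False
  assume l: "cyl l"
  have "l ((x + j * int k) + int (nat (-j)) * int k) = l (x + j * int k) - int (nat (-j)) * c"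
    by (rule cyl_shift_nat[OF l])
  then show ?thesis using False by (simp add: algebra_simps)
qed

lemma cyl_canon: "cyl l \<Longrightarrow> l x = l (x mod int k) - (x div int k) * c"
  using cyl_shift[of l "x mod int k" "x div int k"] by (simp add: algebra_simps)

lemma cyl_eq:
  assumes "cyl l" "cyl m" "\<And>x. 0 \<le> x \<Longrightarrow> x < int k \<Longrightarrow> l x = m x"
  shows "l = m"
proof
  fix x
  have "0 \<le> x mod int k" "x mod int k < int k" using kpos by auto
  then show "l x = m x" using cyl_canon[OF assms(1), of x] cyl_canon[OF assms(2), of x] assms(3) by simp
qed

lemma cyl_antimono: assumes "cyl l" "x \<le> y" shows "l y \<le> l x"
proof -
  have "l (x + int j) \<le> l x" for j
  proof (induction j)
    case 0 then show ?case by simp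
  next
    case (Suc j)
    have "l (x + int (Suc j)) = l ((x + int j) + 1)" by (simp add: algebra_simps)
    also have "\<dots> \<le> l (x + int j)" using cyl_mono1[OF assms(1)] by blast
    finally show ?case using Suc by simp
  qed
  from this[of "nat (y - x)"] assms(2) show ?thesis by simp
qed


lemma cyl_res: "cyl l \<Longrightarrow> l (x + d) = l (x mod int k + d) - (x div int k) * c"
  using cyl_shift[of l "x mod int k + d" "x div int k"] by (simp add: algebra_simps)

lemma cyl_res0: "cyl l \<Longrightarrow> l x = l (x mod int k) - (x div int k) * c"
  using cyl_res[of l x 0] by simp

definition ee :: "nat \<Rightarrow> int \<Rightarrow> int" where
  "ee r x = (if x mod int k = int r then 1 else 0)"
definition addE :: "(int \<Rightarrow> int) \<Rightarrow> nat \<Rightarrow> int \<Rightarrow> int" where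
  "addE l r = (\<lambda>x. l x + ee r x)"
definition subE :: "(int \<Rightarrow> int) \<Rightarrow> nat \<Rightarrow> int \<Rightarrow> int" where
  "subE l r = (\<lambda>x. l x - ee r x)"

lemma ee_per: "ee r (x + int k) = ee r x"
  by (simp add: ee_def)
lemma ee_ge0: "0 \<le> ee r x" and ee_le1: "ee r x \<le> 1"
  by (auto simp: ee_def)
lemma ee_disj: "r \<noteq> s \<Longrightarrow> ee r x = 0 \<or> ee s x = 0"
  by (auto simp: ee_def)
lemma ee_self: "r < k \<Longrightarrow> ee r (int r) = 1"
  by (simp add: ee_def)

lemma cyl_subE:
  assumes l: "cyl l" and r: "r < k"
  shows "cyl (subE l r) \<longleftrightarrow> l (int r + 1) < l (int r)"
proof
  assume h: "cyl (subE l r)"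
  show "l (int r + 1) < l (int r)"
  proof (cases "k = 1")
    case True
    then show ?thesis using cyl_per[OF l, of "int r"] r cpos by simp
  next
    case False
    have "ee r (int r + 1) = 0"
    proof (cases "r + 1 < k")
      case True then show ?thesis by (simp add: ee_def)
    next
      case F: False
      then have "int r + 1 = int k" using r by simp
      then show ?thesis using False r by (simp add: ee_def)
    qed
    then show ?thesis using cyl_mono1[OF h, of "int r"] ee_self[OF r] by (simp add: subE_def)
  qed
next
  assume h: "l (int r + 1) < l (int r)"
  show "cyl (subE l r)"
    unfolding cyl_partition_def
  proof (intro conjI allI)
    fix m
    show "subE l r m = subE l r (m + int k) + (int n - int k)"
      using cyl_per[OF l, of m] ee_per[of r m] by (simp add: subE_def)
    show "subE l r (m + 1) \<le> subE l r m"
    proof (cases "ee r m = 0")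
      case True
      then show ?thesis using cyl_mono1[OF l, of m] ee_ge0[of r "m+1"] by (simp add: subE_def)
    next
      case False
      then have mr: "m mod int k = int r" by (simp add: ee_def split: if_splits)
      have "l (m + 1) = l (int r + 1) - (m div int k) * c" using cyl_res[OF l, of m 1] mr by simp
      moreover have "l m = l (int r) - (m div int k) * c" using cyl_res0[OF l, of m] mr by simp
      moreover have "ee r m = 1" using mr by (simp add: ee_def)
      ultimately show ?thesis using h ee_ge0[of r "m+1"] by (simp add: subE_def)
    qed
  qed
qed

lemma cyl_addE:
  assumes l: "cyl l" and r: "r < k"
  shows "cyl (addE l r) \<longleftrightarrow> l (int r) < l (int r - 1)"
proof
  assume h: "cyl (addE l r)"
  show "l (int r) < l (int r - 1)"
  proof (cases "k = 1")
    case True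
    then show ?thesis using cyl_per[OF l, of "int r - 1"] r cpos by simp
  next
    case False
    have "ee r (int r - 1) = 0"
    proof (cases "r = 0")
      case False then show ?thesis using r by (simp add: ee_def)
    next
      case T: True
      have "(-1::int) mod int k = int k - 1" using k1 False
        by (simp add: zmod_minus1)
      then show ?thesis using T False k1 by (simp add: ee_def)
    qed
    then show ?thesis using cyl_mono1[OF h, of "int r - 1"] ee_self[OF r] by (simp add: addE_def)
  qed
next
  assume h: "l (int r) < l (int r - 1)"
  show "cyl (addE l r)"
    unfolding cyl_partition_def
  proof (intro conjI allI)
    fix m
    show "addE l r m = addE l r (m + int k) + (int n - int k)"
      using cyl_per[OF l, of m] ee_per[of r m] by (simp add: addE_def)
    show "addE l r (m + 1) \<le> addE l r m"
    proof (cases "ee r (m + 1) = 0")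
      case True
      then show ?thesis using cyl_mono1[OF l, of m] ee_ge0[of r "m"] by (simp add: addE_def)
    next
      case False
      then have mr: "(m + 1) mod int k = int r" by (simp add: ee_def split: if_splits)
      have "l ((m + 1) + (-1)) = l (int r + (-1)) - ((m+1) div int k) * c"
        using cyl_res[OF l, of "m+1" "-1"] mr by simp
      moreover have "l (m+1) = l (int r) - ((m+1) div int k) * c" using cyl_res0[OF l, of "m+1"] mr by simp
      moreover have "ee r (m+1) = 1" using mr by (simp add: ee_def)
      ultimately show ?thesis using h ee_ge0[of r "m"] by (simp add: addE_def)
    qed
  qed
qed

lemma cyl_le_subE:
  assumes l: "cyl l" and m: "cyl m" and le: "cyl_subseteq m l" and r: "r < k"
  shows "cyl_subseteq m (subE l r) \<longleftrightarrow> m (int r) < l (int r)"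
proof
  assume "cyl_subseteq m (subE l r)"
  then show "m (int r) < l (int r)"
  proof -
    have "m (int r) \<le> subE l r (int r)" using \<open>cyl_subseteq m (subE l r)\<close> unfolding cyl_subseteq_def by blast
    then show ?thesis using ee_self[OF r] by (simp add: subE_def)
  qed
next
  assume h: "m (int r) < l (int r)"
  show "cyl_subseteq m (subE l r)"
    unfolding cyl_subseteq_def
  proof
    fix x
    show "m x \<le> subE l r x"
    proof (cases "ee r x = 0")
      case True then show ?thesis using le by (simp add: subE_def cyl_subseteq_def)
    next
      case False
      then have xr: "x mod int k = int r" by (simp add: ee_def split: if_splits)
      then have "ee r x = 1" by (simp add: ee_def)
      moreover have "m x = m (int r) - (x div int k) * c" using cyl_res0[OF m, of x] xr by simp
      moreover have "l x = l (int r) - (x div int k) * c" using cyl_res0[OF l, of x] xr by simp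
      ultimately show ?thesis using h by (simp add: subE_def)
    qed
  qed
qed

lemma cyl_min: assumes "cyl l" "cyl m" shows "cyl (\<lambda>x. min (l x) (m x))"
  unfolding cyl_partition_def
proof (intro conjI allI)
  fix x
  show "min (l (x + 1)) (m (x + 1)) \<le> min (l x) (m x)"
    using cyl_mono1[OF assms(1), of x] cyl_mono1[OF assms(2), of x] by linarith
  have a: "l x = l (x + int k) + c" "m x = m (x + int k) + c"
    using cyl_per[OF assms(1)] cyl_per[OF assms(2)] by blast+
  show "min (l x) (m x) = min (l (x + int k)) (m (x + int k)) + (int n - int k)"
    by (simp only: a min_add_distrib_right)
qed

lemma cyl_max: assumes "cyl l" "cyl m" shows "cyl (\<lambda>x. max (l x) (m x))"
  unfolding cyl_partition_def
proof (intro conjI allI)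
  fix x
  show "max (l (x + 1)) (m (x + 1)) \<le> max (l x) (m x)"
    using cyl_mono1[OF assms(1), of x] cyl_mono1[OF assms(2), of x] by linarith
  have a: "l x = l (x + int k) + c" "m x = m (x + int k) + c"
    using cyl_per[OF assms(1)] cyl_per[OF assms(2)] by blast+
  show "max (l x) (m x) = max (l (x + int k)) (m (x + int k)) + (int n - int k)"
    by (simp only: a max_add_distrib_right)
qed

lemma subE_addE: "subE (addE l r) s = addE (subE l s) r"
  by (auto simp: subE_def addE_def)
lemma subE_addE_same[simp]: "subE (addE l r) r = l"
  by (auto simp: subE_def addE_def)
lemma addE_subE_same[simp]: "addE (subE l r) r = l"
  by (auto simp: subE_def addE_def)

lemma offdiag:
  assumes "r \<noteq> s" "cyl m"
  shows "(cyl (addE m r) \<and> cyl (subE (addE m r) s)) \<longleftrightarrow>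
         (cyl (subE m s) \<and> cyl (addE (subE m s) r))"
proof -
  let ?p = "subE (addE m r) s"
  have mx: "addE m r = (\<lambda>x. max (m x) (?p x))"
  proof
    fix x show "addE m r x = max (m x) (?p x)"
      using ee_disj[OF assms(1), of x] ee_ge0[of r x] ee_ge0[of s x]
      by (auto simp: addE_def subE_def)
  qed
  have mn: "subE m s = (\<lambda>x. min (m x) (?p x))"
  proof
    fix x show "subE m s x = min (m x) (?p x)"
      using ee_disj[OF assms(1), of x] ee_ge0[of r x] ee_ge0[of s x]
      by (auto simp: addE_def subE_def)
  qed
  show ?thesis
  proof
    assume h: "cyl (addE m r) \<and> cyl ?p"
    then show "cyl (subE m s) \<and> cyl (addE (subE m s) r)"
      using cyl_min[OF assms(2), of ?p] mn subE_addE by metis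
  next
    assume h: "cyl (subE m s) \<and> cyl (addE (subE m s) r)"
    then have "cyl ?p" by (simp add: subE_addE)
    then show "cyl (addE m r) \<and> cyl ?p"
      using cyl_max[OF assms(2), of ?p] mx by metis
  qed
qed

definition Up :: "((int \<Rightarrow> int) \<Rightarrow> nat) \<Rightarrow> (int \<Rightarrow> int) \<Rightarrow> nat" where
  "Up v l = (\<Sum>r<k. if cyl l \<and> cyl (subE l r) then v (subE l r) else 0)"
definition Dn :: "((int \<Rightarrow> int) \<Rightarrow> nat) \<Rightarrow> (int \<Rightarrow> int) \<Rightarrow> nat" where
  "Dn v m = (\<Sum>r<k. if cyl m \<and> cyl (addE m r) then v (addE m r) else 0)"

lemma desc_count:
  assumes m: "cyl m"
  shows "(\<Sum>r<k. if cyl (addE m r) then 1 else 0) = (\<Sum>r<k. if cyl (subE m r) then (1::nat) else 0)"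
proof -
  define f where "f = (\<lambda>r::nat. if m (int r) < m (int r - 1) then (1::nat) else 0)"
  have a: "(\<Sum>r<k. if cyl (addE m r) then 1 else 0) = (\<Sum>r<k. f r)"
    by (rule sum.cong) (auto simp: f_def cyl_addE[OF m])
  have b: "(\<Sum>r<k. if cyl (subE m r) then 1 else 0) = (\<Sum>r<k. f (Suc r))"
    by (rule sum.cong) (auto simp: f_def cyl_subE[OF m] ac_simps)
  have fk: "f k = f 0"
  proof -
    have "m 0 = m (int k) + c" using cyl_per[OF m, of 0] by simp
    moreover have "m (-1) = m (int k - 1) + c" using cyl_per[OF m, of "-1"] by simp
    ultimately show ?thesis by (simp add: f_def)
  qed
  have "(\<Sum>r<Suc k. f r) = f 0 + (\<Sum>r<k. f (Suc r))" by (rule sum.lessThan_Suc_shift)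
  moreover have "(\<Sum>r<Suc k. f r) = (\<Sum>r<k. f r) + f k" by simp
  ultimately show ?thesis using a b fk by simp
qed

lemma DU_UD: "Dn (Up v) m = Up (Dn v) m"
proof (cases "cyl m")
  case False then show ?thesis by (simp add: Up_def Dn_def)
next
  case m: True
  define g1 where "g1 r s = (if cyl (addE m r) \<and> cyl (subE (addE m r) s) then v (subE (addE m r) s) else 0)" for r s
  define g2 where "g2 r s = (if cyl (subE m s) \<and> cyl (addE (subE m s) r) then v (addE (subE m s) r) else 0)" for r s
  have L: "Dn (Up v) m = (\<Sum>r<k. \<Sum>s<k. g1 r s)"
    unfolding Dn_def Up_def g1_def using m by (intro sum.cong) auto
  have R: "Up (Dn v) m = (\<Sum>r<k. \<Sum>s<k. g2 r s)"
    unfolding Dn_def Up_def g2_def using m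
    by (subst sum.swap) (intro sum.cong, auto)
  have split: "(\<Sum>r<k. \<Sum>s<k. g r s) = (\<Sum>r<k. g r r) + (\<Sum>r<k. \<Sum>s\<in>{..<k}-{r}. g r s)" for g :: "nat \<Rightarrow> nat \<Rightarrow> nat"
  proof -
    have "(\<Sum>r<k. \<Sum>s<k. g r s) = (\<Sum>r<k. g r r + (\<Sum>s\<in>{..<k}-{r}. g r s))"
      by (rule sum.cong) (auto intro: sum.remove)
    then show ?thesis by (simp add: sum.distrib)
  qed
  have off: "(\<Sum>r<k. \<Sum>s\<in>{..<k}-{r}. g1 r s) = (\<Sum>r<k. \<Sum>s\<in>{..<k}-{r}. g2 r s)"
  proof (intro sum.cong refl)
    fix r s assume "r \<in> {..<k}" "s \<in> {..<k} - {r}"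
    then have "r \<noteq> s" by auto
    then show "g1 r s = g2 r s" unfolding g1_def g2_def using offdiag[OF _ m, of r s]
      by (simp add: subE_addE)
  qed
  have d1: "(\<Sum>r<k. g1 r r) = (\<Sum>r<k. if cyl (addE m r) then 1 else 0) * v m"
    by (simp add: g1_def sum_distrib_right if_distrib cong: if_cong) (intro sum.cong, auto simp: m)
  have d2: "(\<Sum>r<k. g2 r r) = (\<Sum>r<k. if cyl (subE m r) then 1 else 0) * v m"
    by (simp add: g2_def sum_distrib_right if_distrib cong: if_cong) (intro sum.cong, auto simp: m)
  show ?thesis using L R split[of g1] split[of g2] off d1 d2 desc_count[OF m] by simp
qed

lemma DU_UD_pow: "(Dn ^^ a) ((Up ^^ b) v) = (Up ^^ b) ((Dn ^^ a) v)"
proof -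
  have 1: "Dn ((Up ^^ b) v) = (Up ^^ b) (Dn v)" for v b
  proof (induction b arbitrary: v)
    case 0 then show ?case by simp
  next
    case (Suc b)
    have "Dn ((Up ^^ Suc b) v) = Dn (Up ((Up ^^ b) v))" by simp
    also have "\<dots> = Up (Dn ((Up ^^ b) v))" by (rule ext) (rule DU_UD)
    also have "\<dots> = Up ((Up ^^ b) (Dn v))" using Suc by simp
    finally show ?case by simp
  qed
  show ?thesis
  proof (induction a arbitrary: v)
    case 0 then show ?case by simp
  next
    case (Suc a)
    have "(Dn ^^ Suc a) ((Up ^^ b) v) = (Dn ^^ a) (Dn ((Up ^^ b) v))" by (simp add: funpow_Suc_right del: funpow.simps)
    also have "\<dots> = (Dn ^^ a) ((Up ^^ b) (Dn v))" by (simp add: 1)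
    also have "\<dots> = (Up ^^ b) ((Dn ^^ a) (Dn v))" by (rule Suc)
    finally show ?case by (simp add: funpow_Suc_right del: funpow.simps)
  qed
qed

fun Ew :: "nat list \<Rightarrow> int \<Rightarrow> int" where
  "Ew [] x = 0"
| "Ew (r # w) x = ee r x + Ew w x"

fun pv :: "(int \<Rightarrow> int) \<Rightarrow> nat list \<Rightarrow> bool" where
  "pv m [] = cyl m"
| "pv m (r # w) = (cyl m \<and> pv (addE m r) w)"

definition W :: "nat \<Rightarrow> nat list set" where
  "W a = {w. set w \<subseteq> {..<k} \<and> length w = a}"
definition pl :: "(int \<Rightarrow> int) \<Rightarrow> nat list \<Rightarrow> int \<Rightarrow> int" where
  "pl m w = (\<lambda>x. m x + Ew w x)"
definition mi :: "(int \<Rightarrow> int) \<Rightarrow> nat list \<Rightarrow> int \<Rightarrow> int" where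
  "mi l w = (\<lambda>x. l x - Ew w x)"
definition dl :: "(int \<Rightarrow> int) \<Rightarrow> (int \<Rightarrow> int) \<Rightarrow> nat" where
  "dl m = (\<lambda>v. if v = m then 1 else 0)"
definition sz :: "(int \<Rightarrow> int) \<Rightarrow> (int \<Rightarrow> int) \<Rightarrow> int" where
  "sz l m = (\<Sum>x\<in>{0..<int k}. l x - m x)"

lemma finite_W: "finite (W a)"
  unfolding W_def by (rule finite_lists_length_eq) simp

lemma W0: "W 0 = {[]}" by (auto simp: W_def)

lemma sum_W_Suc: "(\<Sum>w\<in>W (Suc a). g w) = (\<Sum>r<k. \<Sum>w\<in>W a. g (r # w))"
proof -
  have e: "W (Suc a) = (\<lambda>(xs, n). n # xs) ` (W a \<times> {..<k})"
    unfolding W_def by (rule lists_length_Suc_eq)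
  have inj: "inj_on (\<lambda>(xs, n). n # xs) (W a \<times> {..<k})" by (auto simp: inj_on_def)
  have "(\<Sum>w\<in>W (Suc a). g w) = (\<Sum>p\<in>W a \<times> {..<k}. g ((\<lambda>(xs, n). n # xs) p))"
    unfolding e by (rule sum.reindex[OF inj, unfolded comp_def])
  also have "\<dots> = (\<Sum>w\<in>W a. \<Sum>r<k. g (r # w))"
    by (simp add: sum.cartesian_product split_def)
  also have "\<dots> = (\<Sum>r<k. \<Sum>w\<in>W a. g (r # w))" by (rule sum.swap)
  finally show ?thesis .
qed

lemma Ew_ge0: "0 \<le> Ew w x"
  by (induction w) (auto simp: ee_def)

lemma pl_Cons: "pl m (r # w) = pl (addE m r) w"
  by (auto simp: pl_def addE_def)
lemma mi_Cons: "mi l (s # w) = subE (mi l w) s"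
  by (auto simp: mi_def subE_def)
lemma pl_mi[simp]: "pl (mi l w) w = l" by (auto simp: pl_def mi_def)
lemma mi_pl[simp]: "mi (pl m w) w = m" by (auto simp: pl_def mi_def)
lemma pl_Nil[simp]: "pl m [] = m" by (auto simp: pl_def)
lemma mi_Nil[simp]: "mi m [] = m" by (auto simp: mi_def)

lemma pv_cyl: "pv m w \<Longrightarrow> cyl m"
  by (cases w) auto
lemma pv_end: "pv m w \<Longrightarrow> cyl (pl m w)"
  by (induction w arbitrary: m) (auto simp: pl_Cons)

lemma mi_eq_iff: "(mi l w = m) \<longleftrightarrow> (pl m w = l)"
  by (auto simp: mi_def pl_def)

lemma Dn_pow:
  assumes "cyl m"
  shows "(Dn ^^ a) v m = (\<Sum>u\<in>W a. if pv m u then v (pl m u) else 0)"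
  using assms
proof (induction a arbitrary: m)
  case 0 then show ?case by (simp add: W0)
next
  case (Suc a)
  have "(Dn ^^ Suc a) v m = Dn ((Dn ^^ a) v) m" by simp
  also have "\<dots> = (\<Sum>r<k. if cyl (addE m r) then (\<Sum>u\<in>W a. if pv (addE m r) u then v (pl (addE m r) u) else 0) else 0)"
    unfolding Dn_def[of "(Dn ^^ a) v" m] using Suc by (intro sum.cong) auto
  also have "\<dots> = (\<Sum>r<k. \<Sum>u\<in>W a. if pv m (r # u) then v (pl m (r # u)) else 0)"
  proof (intro sum.cong refl)
    fix r assume "r \<in> {..<k}"
    show "(if cyl (addE m r) then (\<Sum>u\<in>W a. if pv (addE m r) u then v (pl (addE m r) u) else 0) else 0) =
          (\<Sum>u\<in>W a. if pv m (r # u) then v (pl m (r # u)) else 0)"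
      using Suc.prems by (cases "cyl (addE m r)") (auto simp: pl_Cons dest: pv_cyl intro!: sum.neutral cong: if_cong)
  qed
  also have "\<dots> = (\<Sum>u\<in>W (Suc a). if pv m u then v (pl m u) else 0)"
    by (rule sum_W_Suc[symmetric])
  finally show ?case .
qed

lemma Up_pow:
  assumes "cyl l"
  shows "(Up ^^ b) v l = (\<Sum>w\<in>W b. if pv (mi l w) w then v (mi l w) else 0)"
proof (induction b arbitrary: v)
  case 0 then show ?case using assms by (simp add: W0)
next
  case (Suc b)
  have "(Up ^^ Suc b) v l = (Up ^^ b) (Up v) l" by (simp add: funpow_Suc_right del: funpow.simps)
  also have "\<dots> = (\<Sum>w\<in>W b. if pv (mi l w) w then Up v (mi l w) else 0)" by (rule Suc)
  also have "\<dots> = (\<Sum>w\<in>W b. \<Sum>s<k. if pv (mi l (s # w)) (s # w) then v (mi l (s # w)) else 0)"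
  proof (intro sum.cong refl)
    fix w assume "w \<in> W b"
    show "(if pv (mi l w) w then Up v (mi l w) else 0) =
          (\<Sum>s<k. if pv (mi l (s # w)) (s # w) then v (mi l (s # w)) else 0)"
      unfolding Up_def mi_Cons by (auto dest: pv_cyl intro!: sum.cong)
  qed
  also have "\<dots> = (\<Sum>s<k. \<Sum>w\<in>W b. if pv (mi l (s # w)) (s # w) then v (mi l (s # w)) else 0)"
    by (rule sum.swap)
  also have "\<dots> = (\<Sum>w\<in>W (Suc b). if pv (mi l w) w then v (mi l w) else 0)"
    by (rule sum_W_Suc[symmetric])
  finally show ?case .
qed

lemma Up_Dn_delta:
  assumes "cyl m" "cyl l"
  shows "(Up ^^ a) (dl m) l = (Dn ^^ a) (dl l) m"
  unfolding Up_pow[OF assms(2)] Dn_pow[OF assms(1)] dl_def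
  by (intro sum.cong refl) (auto simp: mi_eq_iff)

lemma Up_delta_nz:
  assumes "cyl l" "(Up ^^ a) (dl m) l \<noteq> 0"
  shows "\<exists>w\<in>W a. pv m w \<and> pl m w = l"
proof -
  from sum.not_neutral_contains_not_neutral[OF assms(2)[unfolded Up_pow[OF assms(1)] dl_def]]
  obtain w where w: "w \<in> W a" and h: "(if pv (mi l w) w then if mi l w = m then 1 else 0 else 0) \<noteq> (0::nat)"
    by blast
  from h have "pv (mi l w) w" "mi l w = m" by (meson)+
  then show ?thesis using w by (auto simp: mi_eq_iff)
qed

lemma Dn_delta_nz:
  assumes "cyl m" "(Dn ^^ a) (dl l) m \<noteq> 0"
  shows "\<exists>w\<in>W a. pv m w \<and> pl m w = l"
proof -
  from sum.not_neutral_contains_not_neutral[OF assms(2)[unfolded Dn_pow[OF assms(1)] dl_def]]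
  obtain w where w: "w \<in> W a" and h: "(if pv m w then if pl m w = l then 1 else 0 else 0) \<noteq> (0::nat)"
    by blast
  from h have "pv m w" "pl m w = l" by (meson)+
  then show ?thesis using w by auto
qed

lemma sum_ee: "r < k \<Longrightarrow> (\<Sum>x\<in>{0..<int k}. ee r x) = 1"
proof -
  assume r: "r < k"
  have "(\<Sum>x\<in>{0..<int k}. ee r x) = (\<Sum>x\<in>{0..<int k}. if x = int r then 1 else 0)"
    by (intro sum.cong refl) (auto simp: ee_def)
  also have "\<dots> = 1" using r by simp
  finally show ?thesis .
qed

lemma sum_Ew: "set w \<subseteq> {..<k} \<Longrightarrow> (\<Sum>x\<in>{0..<int k}. Ew w x) = int (length w)"
  by (induction w) (auto simp: sum.distrib sum_ee)

lemma sz_pl: "w \<in> W a \<Longrightarrow> sz (pl m w) m = int a"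
  by (auto simp: sz_def pl_def W_def sum_Ew)

lemma pl_ge: "m x \<le> pl m w x"
  using Ew_ge0 by (simp add: pl_def)

lemma box_mem_iff: "q \<in> box k n p \<longleftrightarrow> (\<exists>j. q = (fst p - j * int k, snd p + j * c))"
  by (auto simp: box_def)

lemma box_self: "p \<in> box k n p"
  unfolding box_mem_iff by (rule exI[of _ 0]) simp

lemma box_shift: "box k n (x - j * int k, y + j * c) = box k n (x, y)"
proof (rule set_eqI)
  fix q
  show "q \<in> box k n (x - j * int k, y + j * c) \<longleftrightarrow> q \<in> box k n (x, y)"
    unfolding box_mem_iff
  proof
    assume "\<exists>i. q = (fst (x - j * int k, y + j * c) - i * int k, snd (x - j * int k, y + j * c) + i * c)"
    then obtain i where "q = (x - j * int k - i * int k, y + j * c + i * c)" by auto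
    then show "\<exists>i. q = (fst (x, y) - i * int k, snd (x, y) + i * c)"
      by (intro exI[of _ "j + i"]) (simp add: algebra_simps)
  next
    assume "\<exists>i. q = (fst (x, y) - i * int k, snd (x, y) + i * c)"
    then obtain i where "q = (x - i * int k, y + i * c)" by auto
    then show "\<exists>i. q = (fst (x - j * int k, y + j * c) - i * int k, snd (x - j * int k, y + j * c) + i * c)"
      by (intro exI[of _ "i - j"]) (simp add: algebra_simps)
  qed
qed

lemma box_eq_iff: "box k n p = box k n q \<longleftrightarrow> q \<in> box k n p"
proof
  assume "box k n p = box k n q" then show "q \<in> box k n p" using box_self[of q] by simp
next
  assume "q \<in> box k n p"
  then obtain j where "q = (fst p - j * int k, snd p + j * c)" by (auto simp: box_mem_iff)
  then show "box k n p = box k n q" using box_shift[of "fst p" j "snd p"] by simp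
qed

lemma in_part_shift: "cyl l \<Longrightarrow> in_part l (x - j * int k, y + j * c) \<longleftrightarrow> in_part l (x, y)"
  using cyl_shift[of l x "-j"] by (simp add: in_part_def algebra_simps)

lemma skew_points_iff: "(x, y) \<in> skew_points l m \<longleftrightarrow> m x < y \<and> y \<le> l x"
  by (auto simp: skew_points_def in_part_def)

lemma skew_sat:
  assumes "cyl l" "cyl m" "p \<in> skew_points l m" "q \<in> box k n p"
  shows "q \<in> skew_points l m"
proof -
  obtain j where q: "q = (fst p - j * int k, snd p + j * c)" using assms(4) by (auto simp: box_mem_iff)
  show ?thesis using assms(3) in_part_shift[OF assms(1), of "fst p" j "snd p"] in_part_shift[OF assms(2), of "fst p" j "snd p"]
    unfolding q skew_points_def by simp
qed

lemma canon_in_box: "(x mod int k, y + (x div int k) * c) \<in> box k n (x, y)"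
  unfolding box_mem_iff by (rule exI[of _ "x div int k"]) (simp add: algebra_simps minus_div_mult_eq_mod)

lemma j_zero:
  fixes a j K :: int
  assumes "0 \<le> a" "a < K" "0 \<le> a - j * K" "a - j * K < K"
  shows "j = 0"
proof (rule ccontr)
  assume "j \<noteq> 0"
  then have "j \<ge> 1 \<or> j \<le> -1" by linarith
  then show False
  proof
    assume "j \<ge> 1"
    then have "j * K \<ge> 1 * K" using assms by (intro mult_right_mono) auto
    then show False using assms by linarith
  next
    assume "j \<le> -1"
    then have "j * K \<le> (-1) * K" using assms by (intro mult_right_mono) auto
    then show False using assms by linarith
  qed
qed

definition Cset :: "(int \<Rightarrow> int) \<Rightarrow> (int \<Rightarrow> int) \<Rightarrow> (int \<times> int) set" where
  "Cset l m = Sigma {0..<int k} (\<lambda>x. {m x<..l x})"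

lemma skew_boxes_Cset:
  assumes "cyl l" "cyl m"
  shows "skew_boxes k n l m = box k n ` Cset l m" and "inj_on (box k n) (Cset l m)"
proof -
  show "skew_boxes k n l m = box k n ` Cset l m"
  proof
    show "box k n ` Cset l m \<subseteq> skew_boxes k n l m"
      unfolding skew_boxes_def Cset_def by (auto simp: skew_points_iff)
    show "skew_boxes k n l m \<subseteq> box k n ` Cset l m"
    proof
      fix b assume "b \<in> skew_boxes k n l m"
      then obtain x y where p: "(x, y) \<in> skew_points l m" and b: "b = box k n (x, y)"
        unfolding skew_boxes_def by auto
      let ?q = "(x mod int k, y + (x div int k) * c)"
      have qb: "?q \<in> box k n (x, y)" by (rule canon_in_box)
      have "?q \<in> skew_points l m" by (rule skew_sat[OF assms p qb])
      then have "?q \<in> Cset l m" using kpos unfolding Cset_def by (auto simp: skew_points_iff)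
      moreover have "b = box k n ?q" using qb b box_eq_iff by blast
      ultimately show "b \<in> box k n ` Cset l m" by blast
    qed
  qed
  show "inj_on (box k n) (Cset l m)"
  proof
    fix p q assume p: "p \<in> Cset l m" and q: "q \<in> Cset l m" and e: "box k n p = box k n q"
    then obtain j where qj: "q = (fst p - j * int k, snd p + j * c)" using box_eq_iff by (auto simp: box_mem_iff)
    have "j = 0" using p q unfolding qj Cset_def by (intro j_zero[of "fst p" "int k" j]) auto
    then show "p = q" using qj by (cases p) simp
  qed
qed

lemma card_skew:
  assumes "cyl l" "cyl m"
  shows "finite (skew_boxes k n l m)" "card (skew_boxes k n l m) = (\<Sum>x\<in>{0..<int k}. nat (l x - m x))"
proof -
  have fC: "finite (Cset l m)" unfolding Cset_def by auto
  show "finite (skew_boxes k n l m)" using skew_boxes_Cset[OF assms] fC by simp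
  have "card (skew_boxes k n l m) = card (Cset l m)"
    using skew_boxes_Cset[OF assms] by (simp add: card_image)
  also have "\<dots> = (\<Sum>x\<in>{0..<int k}. card {m x<..l x})" unfolding Cset_def
    by (rule card_SigmaI) auto
  finally show "card (skew_boxes k n l m) = (\<Sum>x\<in>{0..<int k}. nat (l x - m x))" by simp
qed

lemma card_skew_sz:
  assumes "cyl l" "cyl m" "cyl_subseteq m l"
  shows "int (card (skew_boxes k n l m)) = sz l m"
proof -
  have "int (card (skew_boxes k n l m)) = (\<Sum>x\<in>{0..<int k}. int (nat (l x - m x)))"
    using card_skew(2)[OF assms(1,2)] by simp
  also have "\<dots> = sz l m" unfolding sz_def using assms(3)
    by (intro sum.cong refl) (auto simp: cyl_subseteq_def)
  finally show ?thesis .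
qed

lemma finite_bounded:
  "finite {m. cyl m \<and> (\<forall>x\<in>{0..<int k}. a x \<le> m x \<and> m x \<le> b x)}" (is "finite ?A")
proof -
  have inj: "inj_on (\<lambda>m. restrict m {0..<int k}) ?A"
  proof
    fix m1 m2 assume "m1 \<in> ?A" "m2 \<in> ?A" and e: "restrict m1 {0..<int k} = restrict m2 {0..<int k}"
    then show "m1 = m2"
      by (intro cyl_eq) (auto dest: fun_cong[where x=x for x] simp: restrict_def split: if_splits)
  qed
  have "(\<lambda>m. restrict m {0..<int k}) ` ?A \<subseteq> PiE {0..<int k} (\<lambda>x. {a x..b x})"
    by auto
  moreover have "finite (PiE {0..<int k} (\<lambda>x. {a x..b x}))" by (intro finite_PiE) auto
  ultimately have "finite ((\<lambda>m. restrict m {0..<int k}) ` ?A)" by (rule finite_subset)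
  then show ?thesis using inj finite_imageD by blast
qed

definition Br :: "(int \<Rightarrow> int) \<Rightarrow> nat \<Rightarrow> (int \<times> int) set" where
  "Br l r = box k n (int r, l (int r))"

lemma Br_mem:
  assumes l: "cyl l" and r: "r < k"
  shows "(x, y) \<in> Br l r \<longleftrightarrow> (x mod int k = int r \<and> y = l x)"
proof
  assume "(x, y) \<in> Br l r"
  then obtain j where e: "x = int r - j * int k" "y = l (int r) + j * c"
    unfolding Br_def box_mem_iff by auto
  have "(int r + (-j) * int k) mod int k = int r mod int k" by (rule mod_mult_self1)
  then have "x mod int k = int r" using e(1) r by simp
  moreover have "l x = y"
  proof -
    have "l x = l (int r + (-j) * int k)" using e(1) by simp
    also have "\<dots> = l (int r) + j * c" using cyl_shift[OF l, of "int r" "-j"] by simp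
    finally show ?thesis using e(2) by simp
  qed
  ultimately show "x mod int k = int r \<and> y = l x" by simp
next
  assume h: "x mod int k = int r \<and> y = l x"
  show "(x, y) \<in> Br l r" unfolding Br_def box_mem_iff
  proof (rule exI[of _ "- (x div int k)"])
    have "x = int r + (x div int k) * int k" using h by (metis add.commute mod_div_mult_eq)
    moreover have "l x = l (int r) - (x div int k) * c" using cyl_res0[OF l, of x] h by simp
    ultimately show "(x, y) = (fst (int r, l (int r)) - - (x div int k) * int k, snd (int r, l (int r)) + - (x div int k) * c)"
      using h by simp
  qed
qed

lemma Br_box: "p \<in> Br l r \<Longrightarrow> box k n p = Br l r"
  unfolding Br_def using box_eq_iff by metis

lemma box_in_skew: "p \<in> skew_points l m \<Longrightarrow> box k n p \<in> skew_boxes k n l m"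
  by (simp add: skew_boxes_def)

lemma skew_sub:
  assumes l: "cyl l" and r: "r < k"
  shows "skew_points (subE l r) m = skew_points l m - Br l r"
proof (rule set_eqI)
  fix p :: "int \<times> int"
  obtain x y where p: "p = (x, y)" by (cases p)
  show "p \<in> skew_points (subE l r) m \<longleftrightarrow> p \<in> skew_points l m - Br l r"
    unfolding p by (auto simp: subE_def ee_def skew_points_iff Br_mem[OF l r])
qed

lemma boxes_sub:
  assumes l: "cyl l" and r: "r < k"
  shows "skew_boxes k n (subE l r) m = skew_boxes k n l m - {Br l r}"
proof -
  have "box k n ` (skew_points l m - Br l r) = box k n ` skew_points l m - {Br l r}"
  proof
    show "box k n ` (skew_points l m - Br l r) \<subseteq> box k n ` skew_points l m - {Br l r}"
      using box_self by (auto simp: Br_def box_eq_iff)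
    show "box k n ` skew_points l m - {Br l r} \<subseteq> box k n ` (skew_points l m - Br l r)"
      using Br_box by blast
  qed
  then show ?thesis unfolding skew_boxes_def skew_sub[OF l r] .
qed

lemma std_iff:
  assumes "finite (skew_boxes k n l m)"
  shows "standard_tableau k n l m R \<longleftrightarrow>
    (R \<in> skew_boxes k n l m \<rightarrow>\<^sub>E {1..card (skew_boxes k n l m)} \<and>
     bij_betw R (skew_boxes k n l m) {1..card (skew_boxes k n l m)} \<and> semistandard k n l m R)"
proof
  assume "standard_tableau k n l m R"
  then obtain N where N: "R \<in> skew_boxes k n l m \<rightarrow>\<^sub>E {1..N}" "bij_betw R (skew_boxes k n l m) {1..N}"
    "semistandard k n l m R" unfolding standard_tableau_def by blast
  have "card (skew_boxes k n l m) = N" using bij_betw_same_card[OF N(2)] by simp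
  then show "R \<in> skew_boxes k n l m \<rightarrow>\<^sub>E {1..card (skew_boxes k n l m)} \<and>
     bij_betw R (skew_boxes k n l m) {1..card (skew_boxes k n l m)} \<and> semistandard k n l m R"
    using N by simp
next
  assume "R \<in> skew_boxes k n l m \<rightarrow>\<^sub>E {1..card (skew_boxes k n l m)} \<and>
     bij_betw R (skew_boxes k n l m) {1..card (skew_boxes k n l m)} \<and> semistandard k n l m R"
  then show "standard_tableau k n l m R" unfolding standard_tableau_def by blast
qed

lemma finite_tabs:
  assumes "finite (skew_boxes k n l m)"
  shows "finite {R. standard_tableau k n l m R}"
proof (rule finite_subset)
  show "{R. standard_tableau k n l m R} \<subseteq> skew_boxes k n l m \<rightarrow>\<^sub>E {1..card (skew_boxes k n l m)}"
    using std_iff[OF assms] by blast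
  show "finite (skew_boxes k n l m \<rightarrow>\<^sub>E {1..card (skew_boxes k n l m)})"
    using assms by (intro finite_PiE) auto
qed

lemma bij_upd:
  assumes "bij_betw f A B" "a \<notin> A" "b \<notin> B"
  shows "bij_betw (f(a := b)) (insert a A) (insert b B)"
  using assms unfolding bij_betw_def inj_on_def by (auto simp: image_iff)

lemma atLeastAtMost_Suc_minus: "{1..Suc N} - {Suc N} = {1..(N::nat)}"
  by auto

lemma tab_rec:
  assumes l: "cyl l" and m: "cyl m" and le: "cyl_subseteq m l"
    and cs: "card (skew_boxes k n l m) = Suc N"
  shows "card {R. standard_tableau k n l m R} =
    (\<Sum>r<k. if cyl (subE l r) \<and> cyl_subseteq m (subE l r)
            then card {R. standard_tableau k n (subE l r) m R} else 0)"
proof -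
  define S where "S = skew_boxes k n l m"
  have fS: "finite S" using card_skew(1)[OF l m] S_def by simp
  define G where "G = {r \<in> {..<k}. cyl (subE l r) \<and> cyl_subseteq m (subE l r)}"
  define T where "T r = {R. standard_tableau k n (subE l r) m R}" for r
  define ext where "ext r R' = R'(Br l r := Suc N)" for r and R' :: "(int \<times> int) set \<Rightarrow> nat"
  have Gfacts: "r < k \<and> Br l r \<in> S \<and> skew_boxes k n (subE l r) m = S - {Br l r} \<and>
      finite (skew_boxes k n (subE l r) m) \<and> card (skew_boxes k n (subE l r) m) = N" if "r \<in> G" for r
  proof -
    from that have r: "r < k" and cr: "cyl (subE l r)" and le': "cyl_subseteq m (subE l r)"
      by (auto simp: G_def)
    have "m (int r) < l (int r)" using cyl_le_subE[OF l m le r] le' by simp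
    then have "(int r, l (int r)) \<in> skew_points l m" by (simp add: skew_points_iff)
    then have B: "Br l r \<in> S" unfolding S_def Br_def by (rule box_in_skew)
    have e: "skew_boxes k n (subE l r) m = S - {Br l r}" unfolding S_def by (rule boxes_sub[OF l r])
    show ?thesis using B e fS cs r S_def by (simp add: card_Diff_singleton)
  qed
  have stdS: "standard_tableau k n l m R \<longleftrightarrow>
      (R \<in> S \<rightarrow>\<^sub>E {1..Suc N} \<and> bij_betw R S {1..Suc N} \<and> semistandard k n l m R)" for R
    using std_iff[OF fS[unfolded S_def]] cs S_def by simp

  have maxbox: "\<exists>r\<in>G. R (Br l r) = Suc N" if "standard_tableau k n l m R" for R
  proof -
    from that have R: "R \<in> S \<rightarrow>\<^sub>E {1..Suc N}" "bij_betw R S {1..Suc N}" "semistandard k n l m R"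
      using stdS by auto
    have "Suc N \<in> R ` S" using R(2) by (auto simp: bij_betw_def)
    then obtain b where b: "b \<in> S" "R b = Suc N" by auto
    then obtain x0 y0 where p: "(x0, y0) \<in> skew_points l m" "b = box k n (x0, y0)"
      unfolding S_def skew_boxes_def by auto
    have inj: "inj_on R S" using R(2) bij_betw_def by blast
    have val: "R (box k n q) \<le> Suc N" if "q \<in> skew_points l m" for q
      using R(1) box_in_skew[OF that] S_def by auto
    have ss1: "R (box k n (x, y1)) \<le> R (box k n (x, y2))"
      if "(x, y1) \<in> skew_points l m" "(x, y2) \<in> skew_points l m" "y1 < y2" for x y1 y2
      using R(3) that unfolding semistandard_def by blast
    have ss2: "R (box k n (x1, y)) < R (box k n (x2, y))"
      if "(x1, y) \<in> skew_points l m" "(x2, y) \<in> skew_points l m" "x1 < x2" for x1 x2 y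
      using R(3) that unfolding semistandard_def by blast
    have yq: "y0 = l x0"
    proof (rule ccontr)
      assume "y0 \<noteq> l x0"
      then have "y0 < l x0" using p(1) by (simp add: skew_points_iff)
      then have q: "(x0, y0 + 1) \<in> skew_points l m" using p(1) by (simp add: skew_points_iff)
      have "R (box k n (x0, y0)) \<le> R (box k n (x0, y0 + 1))" using ss1[OF p(1) q] by simp
      then have "R (box k n (x0, y0 + 1)) = R b" using val[OF q] b p by simp
      then have "box k n (x0, y0 + 1) = b" using inj b box_in_skew[OF q] S_def by (metis inj_on_def)
      then have "(x0, y0) \<in> box k n (x0, y0 + 1)" using box_eq_iff p(2) by blast
      then obtain j where j: "x0 = x0 - j * int k" "y0 = y0 + 1 + j * c" by (auto simp: box_mem_iff)
      then have "j = 0" using kpos by simp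
      then show False using j by simp
    qed
    have gap: "l (x0 + 1) < l x0"
    proof (rule ccontr)
      assume "\<not> l (x0 + 1) < l x0"
      then have "y0 \<le> l (x0 + 1)" using yq by simp
      moreover have "m (x0 + 1) < y0" using p(1) cyl_mono1[OF m, of x0] by (simp add: skew_points_iff)
      ultimately have q: "(x0 + 1, y0) \<in> skew_points l m" by (simp add: skew_points_iff)
      have "R (box k n (x0, y0)) < R (box k n (x0 + 1, y0))" using ss2[OF p(1) q] by simp
      then show False using val[OF q] b p by simp
    qed
    define r where "r = nat (x0 mod int k)"
    have r: "r < k" "int r = x0 mod int k" using kpos unfolding r_def
      by (auto simp: nat_less_iff)
    have "l (int r + 1) < l (int r)" using cyl_res[OF l, of x0 1] cyl_res0[OF l, of x0] gap r(2) by simp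
    then have cr: "cyl (subE l r)" using cyl_subE[OF l r(1)] by simp
    have "m (int r) < l (int r)" using cyl_res0[OF m, of x0] cyl_res0[OF l, of x0] p(1) yq r(2)
      by (simp add: skew_points_iff)
    then have "cyl_subseteq m (subE l r)" using cyl_le_subE[OF l m le r(1)] by simp
    then have rG: "r \<in> G" using cr r by (simp add: G_def)
    have "(x0, y0) \<in> Br l r" using Br_mem[OF l r(1)] r(2) yq by simp
    then have "Br l r = b" using Br_box p(2) by simp
    then show ?thesis using b rG by auto
  qed

  have restr: "standard_tableau k n (subE l r) m (restrict R (S - {Br l r}))"
    if rG: "r \<in> G" and Rs: "standard_tableau k n l m R" and RB: "R (Br l r) = Suc N" for r R
  proof -
    from Rs have R: "R \<in> S \<rightarrow>\<^sub>E {1..Suc N}" "bij_betw R S {1..Suc N}" "semistandard k n l m R"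
      using stdS by auto
    note G' = Gfacts[OF rG]
    let ?S' = "S - {Br l r}"
    have r: "r < k" using G' by blast
    have f': "finite (skew_boxes k n (subE l r) m)" using G' by blast
    have e1: "skew_boxes k n (subE l r) m = ?S'" using G' by blast
    have e2: "card ?S' = N" using G' by metis
    have "bij_betw R ?S' ({1..Suc N} - {Suc N})"
    proof (rule bij_betw_DiffI[OF R(2)])
      show "bij_betw R {Br l r} {Suc N}" using RB by simp
      show "{Br l r} \<subseteq> S" using G' by blast
      show "{Suc N} \<subseteq> {1..Suc N}" by simp
    qed
    then have bij: "bij_betw (restrict R ?S') ?S' {1..N}" by (simp only: atLeastAtMost_Suc_minus bij_betw_restrict_eq)
    have pi: "restrict R ?S' \<in> ?S' \<rightarrow>\<^sub>E {1..N}"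
      unfolding restrict_PiE_iff
    proof
      fix i assume i: "i \<in> ?S'"
      have "restrict R ?S' i \<in> {1..N}" by (rule funcset_mem[OF bij_betw_imp_funcset[OF bij] i])
      then show "R i \<in> {1..N}" using i by simp
    qed
    have pts: "p \<in> skew_points l m \<and> restrict R ?S' (box k n p) = R (box k n p)" if "p \<in> skew_points (subE l r) m" for p
    proof -
      have "p \<in> skew_points l m" using that skew_sub[OF l r, of m] by blast
      moreover have "box k n p \<in> ?S'" using box_in_skew[OF that] e1 by simp
      ultimately show ?thesis by simp
    qed
    have ss1: "R (box k n (x, y1)) \<le> R (box k n (x, y2))"
      if "(x, y1) \<in> skew_points l m" "(x, y2) \<in> skew_points l m" "y1 < y2" for x y1 y2
      using R(3) that unfolding semistandard_def by blast
    have ss2: "R (box k n (x1, y)) < R (box k n (x2, y))"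
      if "(x1, y) \<in> skew_points l m" "(x2, y) \<in> skew_points l m" "x1 < x2" for x1 x2 y
      using R(3) that unfolding semistandard_def by blast
    have ss: "semistandard k n (subE l r) m (restrict R ?S')"
      unfolding semistandard_def
    proof (intro conjI allI impI)
      fix x y1 y2 assume h: "(x, y1) \<in> skew_points (subE l r) m \<and> (x, y2) \<in> skew_points (subE l r) m \<and> y1 < y2"
      then show "restrict R ?S' (box k n (x, y1)) \<le> restrict R ?S' (box k n (x, y2))"
        using pts[of "(x, y1)"] pts[of "(x, y2)"] ss1[of x y1 y2] by metis
    next
      fix x1 x2 y assume h: "(x1, y) \<in> skew_points (subE l r) m \<and> (x2, y) \<in> skew_points (subE l r) m \<and> x1 < x2"
      then show "restrict R ?S' (box k n (x1, y)) < restrict R ?S' (box k n (x2, y))"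
        using pts[of "(x1, y)"] pts[of "(x2, y)"] ss2[of x1 y x2] by metis
    qed
    show ?thesis unfolding std_iff[OF f'] e1 e2 using pi bij ss by blast
  qed

  have extstd: "standard_tableau k n l m (ext r R')" if rG: "r \<in> G" and RT: "R' \<in> T r" for r R'
  proof -
    note G' = Gfacts[OF rG]
    have r: "r < k" and cr: "cyl (subE l r)" using rG by (auto simp: G_def)
    let ?S' = "S - {Br l r}"
    have f': "finite (skew_boxes k n (subE l r) m)" using G' by blast
    have e1: "skew_boxes k n (subE l r) m = ?S'" using G' by blast
    have e2: "card ?S' = N" using G' by metis
    from RT have R': "R' \<in> ?S' \<rightarrow>\<^sub>E {1..N}" "bij_betw R' ?S' {1..N}" "semistandard k n (subE l r) m R'"
      unfolding T_def mem_Collect_eq std_iff[OF f'] e1 e2 by blast+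
    have SB: "insert (Br l r) ?S' = S" using G' by auto
    have pi: "ext r R' \<in> S \<rightarrow>\<^sub>E {1..Suc N}"
    proof (rule PiE_I)
      fix b assume bS: "b \<in> S" show "ext r R' b \<in> {1..Suc N}"
      proof (cases "b = Br l r")
        case True then show ?thesis by (simp add: ext_def)
      next
        case False
        then have "b \<in> ?S'" using bS by blast
        then have "R' b \<in> {1..N}" by (rule PiE_mem[OF R'(1)])
        then show ?thesis using False by (simp add: ext_def)
      qed
    next
      fix b assume "b \<notin> S" then show "ext r R' b = undefined"
        using PiE_arb[OF R'(1), of b] G' by (auto simp: ext_def)
    qed
    have "bij_betw (ext r R') (insert (Br l r) ?S') (insert (Suc N) {1..N})"
      unfolding ext_def by (rule bij_upd[OF R'(2)]) auto
    moreover have "insert (Suc N) {1..N} = {1..Suc N}" by auto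
    ultimately have bij: "bij_betw (ext r R') S {1..Suc N}" by (simp only: SB)
    have vin: "ext r R' (box k n p) = Suc N" if "p \<in> Br l r" for p
      using Br_box[OF that] ext_def by simp
    have vout: "p \<in> skew_points (subE l r) m \<and> ext r R' (box k n p) = R' (box k n p) \<and> R' (box k n p) \<le> N"
      if "p \<in> skew_points l m" "p \<notin> Br l r" for p
    proof -
      have p': "p \<in> skew_points (subE l r) m" using that skew_sub[OF l r, of m] by auto
      then have bS: "box k n p \<in> ?S'" using box_in_skew[OF p'] G' by simp
      then have ne: "box k n p \<noteq> Br l r" by simp
      have "R' (box k n p) \<in> {1..N}" by (rule PiE_mem[OF R'(1) bS])
      then show ?thesis using p' ne by (simp add: ext_def)
    qed
    have ssR: "R' (box k n (x, y1)) \<le> R' (box k n (x, y2))"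
      if "(x, y1) \<in> skew_points (subE l r) m" "(x, y2) \<in> skew_points (subE l r) m" "y1 < y2" for x y1 y2
      using R'(3) that unfolding semistandard_def by blast
    have ssR2: "R' (box k n (x1, y)) < R' (box k n (x2, y))"
      if "(x1, y) \<in> skew_points (subE l r) m" "(x2, y) \<in> skew_points (subE l r) m" "x1 < x2" for x1 x2 y
      using R'(3) that unfolding semistandard_def by blast
    have gapr: "l (x + 1) < l x" if "x mod int k = int r" for x
    proof -
      have "l (int r + 1) < l (int r)" using cyl_subE[OF l r] cr by simp
      then show ?thesis using cyl_res[OF l, of x 1] cyl_res0[OF l, of x] that by simp
    qed
    have ss: "semistandard k n l m (ext r R')"
      unfolding semistandard_def
    proof (intro conjI allI impI)
      fix x y1 y2 assume h: "(x, y1) \<in> skew_points l m \<and> (x, y2) \<in> skew_points l m \<and> y1 < y2"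
      show "ext r R' (box k n (x, y1)) \<le> ext r R' (box k n (x, y2))"
      proof (cases "(x, y1) \<in> Br l r")
        case True
        then have "y1 = l x" using Br_mem[OF l r] by simp
        then show ?thesis using h by (simp add: skew_points_iff)
      next
        case F1: False
        show ?thesis
        proof (cases "(x, y2) \<in> Br l r")
          case True then show ?thesis using vin[OF True] vout[of "(x, y1)"] F1 h by simp
        next
          case False
          then show ?thesis using vout[of "(x, y1)"] vout[of "(x, y2)"] F1 h ssR by simp
        qed
      qed
    next
      fix x1 x2 y assume h: "(x1, y) \<in> skew_points l m \<and> (x2, y) \<in> skew_points l m \<and> x1 < x2"
      show "ext r R' (box k n (x1, y)) < ext r R' (box k n (x2, y))"
      proof (cases "(x1, y) \<in> Br l r")
        case True
        then have a: "x1 mod int k = int r" "y = l x1" using Br_mem[OF l r] by auto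
        have "l (x1 + 1) < l x1" by (rule gapr[OF a(1)])
        moreover have "l x2 \<le> l (x1 + 1)" using cyl_antimono[OF l, of "x1 + 1" x2] h by simp
        moreover have "y \<le> l x2" using h by (simp add: skew_points_iff)
        ultimately show ?thesis using a(2) by simp
      next
        case F1: False
        show ?thesis
        proof (cases "(x2, y) \<in> Br l r")
          case True then show ?thesis using vin[OF True] vout[of "(x1, y)"] F1 h by simp
        next
          case False
          then show ?thesis using vout[of "(x1, y)"] vout[of "(x2, y)"] F1 h ssR2 by simp
        qed
      qed
    qed
    show ?thesis using stdS pi bij ss by simp
  qed

  have inv: "ext r (restrict R (S - {Br l r})) = R"
    if "standard_tableau k n l m R" "R (Br l r) = Suc N" for r R
  proof
    fix b
    have R: "R \<in> S \<rightarrow>\<^sub>E {1..Suc N}" using that stdS by auto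
    show "ext r (restrict R (S - {Br l r})) b = R b"
      using that(2) PiE_arb[OF R, of b] by (cases "b = Br l r") (auto simp: ext_def)
  qed

  have eq: "{R. standard_tableau k n l m R} = (\<Union>r\<in>G. ext r ` T r)"
  proof
    show "{R. standard_tableau k n l m R} \<subseteq> (\<Union>r\<in>G. ext r ` T r)"
    proof
      fix R assume "R \<in> {R. standard_tableau k n l m R}"
      then have R: "standard_tableau k n l m R" by simp
      obtain r where r: "r \<in> G" "R (Br l r) = Suc N" using maxbox[OF R] by blast
      have "R = ext r (restrict R (S - {Br l r}))" using inv[OF R r(2)] by simp
      moreover have "restrict R (S - {Br l r}) \<in> T r" using restr[OF r(1) R r(2)] T_def by simp
      ultimately show "R \<in> (\<Union>r\<in>G. ext r ` T r)" using r(1) by blast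
    qed
    show "(\<Union>r\<in>G. ext r ` T r) \<subseteq> {R. standard_tableau k n l m R}" using extstd by blast
  qed
  have finG: "finite G" unfolding G_def by simp
  have finT: "finite (T r)" if "r \<in> G" for r
    using finite_tabs[of "subE l r" m] Gfacts[OF that] unfolding T_def by blast
  have injE: "inj_on (ext r) (T r)" if rG: "r \<in> G" for r
  proof
    fix R1 R2 assume R1: "R1 \<in> T r" and R2: "R2 \<in> T r" and e: "ext r R1 = ext r R2"
    note G' = Gfacts[OF rG]
    have f': "finite (skew_boxes k n (subE l r) m)" using G' by blast
    have P1: "R1 \<in> skew_boxes k n (subE l r) m \<rightarrow>\<^sub>E {1..card (skew_boxes k n (subE l r) m)}"
      using R1 std_iff[OF f'] unfolding T_def by blast
    have P2: "R2 \<in> skew_boxes k n (subE l r) m \<rightarrow>\<^sub>E {1..card (skew_boxes k n (subE l r) m)}"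
      using R2 std_iff[OF f'] unfolding T_def by blast
    show "R1 = R2"
    proof
      fix b show "R1 b = R2 b"
      proof (cases "b = Br l r")
        case True
        then have "b \<notin> skew_boxes k n (subE l r) m" using G' by simp
        then show ?thesis using PiE_arb[OF P1] PiE_arb[OF P2] by simp
      next
        case False
        then show ?thesis using fun_cong[OF e, of b] by (simp add: ext_def)
      qed
    qed
  qed
  have disj: "ext r1 ` T r1 \<inter> ext r2 ` T r2 = {}" if "r1 \<in> G" "r2 \<in> G" "r1 \<noteq> r2" for r1 r2
  proof (rule ccontr)
    assume "ext r1 ` T r1 \<inter> ext r2 ` T r2 \<noteq> {}"
    then obtain R R1 R2 where RR: "R1 \<in> T r1" "R2 \<in> T r2" "R = ext r1 R1" "R = ext r2 R2" by blast
    then have Rs: "standard_tableau k n l m R" using extstd that by blast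
    have v1: "R (Br l r1) = Suc N" using RR(3) by (simp add: ext_def)
    have v2: "R (Br l r2) = Suc N" using RR(4) by (simp add: ext_def)
    note v = v1 v2
    have inj: "inj_on R S" using Rs stdS bij_betw_def by blast
    have "Br l r1 = Br l r2" using inj v Gfacts[OF that(1)] Gfacts[OF that(2)] by (metis inj_on_def)
    moreover have "(int r2, l (int r2)) \<in> Br l r2" unfolding Br_def by (rule box_self)
    ultimately have "int r2 mod int k = int r1" using Br_mem[OF l, of r1] Gfacts[OF that(1)] by auto
    then have "r2 = r1" using Gfacts[OF that(2)] by (simp add: mod_pos_pos_trivial)
    then show False using that(3) by simp
  qed
  have "card {R. standard_tableau k n l m R} = (\<Sum>r\<in>G. card (ext r ` T r))"
    unfolding eq by (rule card_UN_disjoint) (use finG finT disj in auto)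
  also have "\<dots> = (\<Sum>r\<in>G. card (T r))" using card_image injE by (intro sum.cong) auto
  also have "\<dots> = (\<Sum>r<k. if cyl (subE l r) \<and> cyl_subseteq m (subE l r) then card (T r) else 0)"
    unfolding G_def by (rule sum.inter_filter) simp
  finally show ?thesis unfolding T_def .
qed

lemma sz_subE: "r < k \<Longrightarrow> sz (subE l r) m = sz l m - 1"
proof -
  assume r: "r < k"
  have "sz (subE l r) m = (\<Sum>x\<in>{0..<int k}. (l x - m x) - ee r x)"
    unfolding sz_def subE_def by (intro sum.cong) auto
  also have "\<dots> = sz l m - (\<Sum>x\<in>{0..<int k}. ee r x)" unfolding sz_def by (rule sum_subtractf)
  finally show ?thesis using sum_ee[OF r] by simp
qed

lemma sz_zero_eq:
  assumes "cyl l" "cyl m" "cyl_subseteq m l" "sz l m = 0"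
  shows "l = m"
proof (rule cyl_eq[OF assms(1,2)])
  fix x :: int assume x: "0 \<le> x" "x < int k"
  have "\<forall>x\<in>{0..<int k}. l x - m x = 0"
    using assms(4) sum_nonneg_eq_0_iff[of "{0..<int k}" "\<lambda>x. l x - m x"] assms(3)
    unfolding sz_def cyl_subseteq_def by auto
  then show "l x = m x" using x by auto
qed

lemma num_syt_refl:
  assumes "cyl m"
  shows "num_syt k n m m = 1"
proof -
  have e: "skew_boxes k n m m = {}" by (auto simp: skew_boxes_def skew_points_def)
  have "{R. standard_tableau k n m m R} = {\<lambda>x. undefined}"
  proof -
    have "standard_tableau k n m m R \<longleftrightarrow> R = (\<lambda>x. undefined)" for R
    proof -
      have ss: "semistandard k n m m R" unfolding semistandard_def skew_points_def by auto
      show ?thesis unfolding std_iff[of m m, unfolded e, OF finite.emptyI] using ss by (auto simp: bij_betw_def)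
    qed
    then show ?thesis by auto
  qed
  then show ?thesis unfolding num_syt_def by simp
qed

lemma num_syt_Up_aux:
  assumes m: "cyl m"
  shows "cyl l \<Longrightarrow> cyl_subseteq m l \<Longrightarrow> card (skew_boxes k n l m) = N \<Longrightarrow>
         num_syt k n l m = (Up ^^ N) (dl m) l"
proof (induction N arbitrary: l)
  case 0
  have "sz l m = 0" using card_skew_sz[OF 0(1) m 0(2)] 0(3) by simp
  then have "l = m" using sz_zero_eq[OF 0(1) m 0(2)] by simp
  then show ?case using num_syt_refl[OF m] by (simp add: dl_def)
next
  case (Suc N)
  have l: "cyl l" and le: "cyl_subseteq m l" using Suc.prems by auto
  have "num_syt k n l m = (\<Sum>r<k. if cyl (subE l r) \<and> cyl_subseteq m (subE l r)
            then num_syt k n (subE l r) m else 0)"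
    unfolding num_syt_def by (rule tab_rec[OF l m le Suc.prems(3)])
  also have "\<dots> = (\<Sum>r<k. if cyl l \<and> cyl (subE l r) then (Up ^^ N) (dl m) (subE l r) else 0)"
  proof (intro sum.cong refl)
    fix r assume "r \<in> {..<k}"
    then have r: "r < k" by simp
    show "(if cyl (subE l r) \<and> cyl_subseteq m (subE l r) then num_syt k n (subE l r) m else 0) =
          (if cyl l \<and> cyl (subE l r) then (Up ^^ N) (dl m) (subE l r) else 0)"
    proof (cases "cyl (subE l r)")
      case False then show ?thesis by simp
    next
      case cr: True
      show ?thesis
      proof (cases "cyl_subseteq m (subE l r)")
        case True
        have "int (card (skew_boxes k n (subE l r) m)) = sz (subE l r) m"
          by (rule card_skew_sz[OF cr m True])
        also have "\<dots> = sz l m - 1" by (rule sz_subE[OF r])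
        also have "\<dots> = int N" using card_skew_sz[OF l m le] Suc.prems(3) by simp
        finally have "card (skew_boxes k n (subE l r) m) = N" by simp
        then show ?thesis using Suc.IH[OF cr True] cr True l by simp
      next
        case False
        have "(Up ^^ N) (dl m) (subE l r) = 0"
        proof (rule ccontr)
          assume "(Up ^^ N) (dl m) (subE l r) \<noteq> 0"
          then obtain w where "pl m w = subE l r" using Up_delta_nz[OF cr] by blast
          then have "cyl_subseteq m (subE l r)" unfolding cyl_subseteq_def using pl_ge by metis
          then show False using False by simp
        qed
        then show ?thesis using False by simp
      qed
    qed
  qed
  also have "\<dots> = Up ((Up ^^ N) (dl m)) l" by (simp only: Up_def)
  also have "\<dots> = (Up ^^ Suc N) (dl m) l" by simp
  finally show ?case .
qed

lemma num_syt_Up: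
  assumes "cyl l" "cyl m" "cyl_subseteq m l"
  shows "num_syt k n l m = (Up ^^ nat (sz l m)) (dl m) l"
proof -
  have "nat (sz l m) = card (skew_boxes k n l m)" using card_skew_sz[OF assms] by simp
  then show ?thesis using num_syt_Up_aux[OF assms(2,1,3)] by simp
qed

lemma sz_diff: "sz b m = sz a m - (\<Sum>x\<in>{0..<int k}. a x - b x)"
  unfolding sz_def sum_subtractf[symmetric] by (intro sum.cong) auto

lemma main:
  fixes M :: nat
  assumes a: "cyl alpha" and b: "cyl beta"
  shows "(\<Sum>mu \<in> {mu. cyl_partition k n mu \<and> cyl_subseteq mu alpha \<and> cyl_subseteq mu beta \<and>
                      finite (skew_boxes k n alpha mu) \<and> card (skew_boxes k n alpha mu) = M}.
            num_syt k n alpha mu * num_syt k n beta mu)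
       = (\<Sum>lam \<in> {lam. cyl_partition k n lam \<and> cyl_subseteq alpha lam \<and> cyl_subseteq beta lam \<and>
                      finite (skew_boxes k n lam beta) \<and> card (skew_boxes k n lam beta) = M}.
            num_syt k n lam alpha * num_syt k n lam beta)"
proof -
  define S where "S = {mu. cyl_partition k n mu \<and> cyl_subseteq mu alpha \<and> cyl_subseteq mu beta \<and>
                      finite (skew_boxes k n alpha mu) \<and> card (skew_boxes k n alpha mu) = M}"
  define T where "T = {lam. cyl_partition k n lam \<and> cyl_subseteq alpha lam \<and> cyl_subseteq beta lam \<and>
                      finite (skew_boxes k n lam beta) \<and> card (skew_boxes k n lam beta) = M}"
  define D where "D = (\<Sum>x\<in>{0..<int k}. alpha x - beta x)"
  define bb where "bb = nat (int M - D)"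
  define v where "v = dl alpha"
  have finS: "finite S"
  proof (rule finite_subset[OF _ finite_bounded[of "\<lambda>x. alpha x - int M" alpha]])
    show "S \<subseteq> {m. cyl m \<and> (\<forall>x\<in>{0..<int k}. alpha x - int M \<le> m x \<and> m x \<le> alpha x)}"
    proof
      fix mu assume "mu \<in> S"
      then have mu: "cyl mu" and le: "cyl_subseteq mu alpha" and cM: "card (skew_boxes k n alpha mu) = M"
        unfolding S_def by auto
      have sz: "sz alpha mu = int M" using card_skew_sz[OF a mu le] cM by simp
      have "alpha x - mu x \<le> int M" if "x \<in> {0..<int k}" for x
        using member_le_sum[of x "{0..<int k}" "\<lambda>x. alpha x - mu x"] that le sz
        unfolding sz_def cyl_subseteq_def by auto
      then have "\<forall>x\<in>{0..<int k}. alpha x - int M \<le> mu x \<and> mu x \<le> alpha x"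
        using le unfolding cyl_subseteq_def by (metis diff_le_eq add.commute le_diff_eq)
      then show "mu \<in> {m. cyl m \<and> (\<forall>x\<in>{0..<int k}. alpha x - int M \<le> m x \<and> m x \<le> alpha x)}"
        using mu by blast
    qed
  qed
  have finT: "finite T"
  proof (rule finite_subset[OF _ finite_bounded[of beta "\<lambda>x. beta x + int M"]])
    show "T \<subseteq> {m. cyl m \<and> (\<forall>x\<in>{0..<int k}. beta x \<le> m x \<and> m x \<le> beta x + int M)}"
    proof
      fix lam assume "lam \<in> T"
      then have lam: "cyl lam" and le: "cyl_subseteq beta lam" and cM: "card (skew_boxes k n lam beta) = M"
        unfolding T_def by auto
      have sz: "sz lam beta = int M" using card_skew_sz[OF lam b le] cM by simp
      have "lam x - beta x \<le> int M" if "x \<in> {0..<int k}" for x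
        using member_le_sum[of x "{0..<int k}" "\<lambda>x. lam x - beta x"] that le sz
        unfolding sz_def cyl_subseteq_def by auto
      then have "\<forall>x\<in>{0..<int k}. beta x \<le> lam x \<and> lam x \<le> beta x + int M"
        using le unfolding cyl_subseteq_def by (metis diff_le_eq add.commute)
      then show "lam \<in> {m. cyl m \<and> (\<forall>x\<in>{0..<int k}. beta x \<le> m x \<and> m x \<le> beta x + int M)}"
        using lam by blast
    qed
  qed
  have numS: "num_syt k n alpha mu * num_syt k n beta mu =
      (Dn ^^ M) v mu * (\<Sum>w\<in>W bb. if mi beta w = mu then (if pv (mi beta w) w then 1 else 0) else 0)"
    if "mu \<in> S" for mu
  proof -
    from that have mu: "cyl mu" and le: "cyl_subseteq mu alpha" and le2: "cyl_subseteq mu beta"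
      and cM: "card (skew_boxes k n alpha mu) = M" unfolding S_def by auto
    have sz: "sz alpha mu = int M" using card_skew_sz[OF a mu le] cM by simp
    have sz2: "nat (sz beta mu) = bb" using sz_diff[of beta mu alpha] sz unfolding bb_def D_def by simp
    have 1: "num_syt k n alpha mu = (Dn ^^ M) v mu"
      using num_syt_Up[OF a mu le] sz Up_Dn_delta[OF mu a] unfolding v_def by simp
    have 2: "num_syt k n beta mu = (\<Sum>w\<in>W bb. if mi beta w = mu then (if pv (mi beta w) w then 1 else 0) else 0)"
      unfolding num_syt_Up[OF b mu le2] sz2 Up_pow[OF b] dl_def by (intro sum.cong) auto
    show ?thesis using 1 2 by simp
  qed
  have memS: "mi beta w \<in> S" if w: "w \<in> W bb" and pv: "pv (mi beta w) w" and nz: "(Dn ^^ M) v (mi beta w) \<noteq> 0" for w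
  proof -
    let ?mu = "mi beta w"
    have mu: "cyl ?mu" using pv_cyl[OF pv] .
    obtain u where u: "u \<in> W M" "pv ?mu u" "pl ?mu u = alpha" using Dn_delta_nz[OF mu nz[unfolded v_def]] by blast
    have le: "cyl_subseteq ?mu alpha" unfolding cyl_subseteq_def using pl_ge u(3) by metis
    have le2: "cyl_subseteq ?mu beta" unfolding cyl_subseteq_def using pl_ge[of ?mu _ w] by simp
    have "int (card (skew_boxes k n alpha ?mu)) = int M"
      using card_skew_sz[OF a mu le] sz_pl[OF u(1), of ?mu] u(3) by simp
    then show ?thesis unfolding S_def using mu le le2 card_skew(1)[OF a mu] by simp
  qed
  have L: "(\<Sum>mu\<in>S. num_syt k n alpha mu * num_syt k n beta mu) = (Up ^^ bb) ((Dn ^^ M) v) beta"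
  proof -
    have "(\<Sum>mu\<in>S. num_syt k n alpha mu * num_syt k n beta mu) =
        (\<Sum>mu\<in>S. \<Sum>w\<in>W bb. if mi beta w = mu then (if pv (mi beta w) w then (Dn ^^ M) v mu else 0) else 0)"
    proof (intro sum.cong refl)
      fix mu assume muS: "mu \<in> S"
      show "num_syt k n alpha mu * num_syt k n beta mu =
        (\<Sum>w\<in>W bb. if mi beta w = mu then (if pv (mi beta w) w then (Dn ^^ M) v mu else 0) else 0)"
        unfolding numS[OF muS] sum_distrib_left by (intro sum.cong refl) auto
    qed
    also have "\<dots> = (\<Sum>w\<in>W bb. \<Sum>mu\<in>S. if mi beta w = mu then (if pv (mi beta w) w then (Dn ^^ M) v mu else 0) else 0)"
      by (rule sum.swap)
    also have "\<dots> = (\<Sum>w\<in>W bb. if mi beta w \<in> S then (if pv (mi beta w) w then (Dn ^^ M) v (mi beta w) else 0) else 0)"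
      using finS by (simp only: sum.delta')
    also have "\<dots> = (\<Sum>w\<in>W bb. if pv (mi beta w) w then (Dn ^^ M) v (mi beta w) else 0)"
      using memS by (intro sum.cong refl) auto
    also have "\<dots> = (Up ^^ bb) ((Dn ^^ M) v) beta" by (rule Up_pow[OF b, symmetric])
    finally show ?thesis .
  qed
  have numT: "num_syt k n lam alpha * num_syt k n lam beta =
      (Up ^^ bb) v lam * (\<Sum>u\<in>W M. if pl beta u = lam then (if pv beta u then 1 else 0) else 0)"
    if "lam \<in> T" for lam
  proof -
    from that have lam: "cyl lam" and le: "cyl_subseteq alpha lam" and le2: "cyl_subseteq beta lam"
      and cM: "card (skew_boxes k n lam beta) = M" unfolding T_def by auto
    have sz: "sz lam beta = int M" using card_skew_sz[OF lam b le2] cM by simp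
    have sz2: "nat (sz lam alpha) = bb"
    proof -
      have "sz lam alpha = sz lam beta - (\<Sum>x\<in>{0..<int k}. alpha x - beta x)"
        unfolding sz_def sum_subtractf[symmetric] by (intro sum.cong) auto
      then show ?thesis using sz unfolding bb_def D_def by simp
    qed
    have 1: "num_syt k n lam alpha = (Up ^^ bb) v lam"
      using num_syt_Up[OF lam a le] sz2 unfolding v_def by simp
    have 2: "num_syt k n lam beta = (\<Sum>u\<in>W M. if pl beta u = lam then (if pv beta u then 1 else 0) else 0)"
    proof -
      have "num_syt k n lam beta = (Up ^^ M) (dl beta) lam" using num_syt_Up[OF lam b le2] sz by simp
      also have "\<dots> = (Dn ^^ M) (dl lam) beta" by (rule Up_Dn_delta[OF b lam])
      also have "\<dots> = (\<Sum>u\<in>W M. if pl beta u = lam then (if pv beta u then 1 else 0) else 0)"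
        unfolding Dn_pow[OF b] dl_def by (intro sum.cong) auto
      finally show ?thesis .
    qed
    show ?thesis using 1 2 by simp
  qed
  have memT: "pl beta u \<in> T" if u: "u \<in> W M" and pv: "pv beta u" and nz: "(Up ^^ bb) v (pl beta u) \<noteq> 0" for u
  proof -
    let ?lam = "pl beta u"
    have lam: "cyl ?lam" using pv_end[OF pv] .
    obtain w where w: "w \<in> W bb" "pv alpha w" "pl alpha w = ?lam" using Up_delta_nz[OF lam nz[unfolded v_def]] by blast
    have le: "cyl_subseteq alpha ?lam" unfolding cyl_subseteq_def using pl_ge w(3) by metis
    have le2: "cyl_subseteq beta ?lam" unfolding cyl_subseteq_def using pl_ge by metis
    have "int (card (skew_boxes k n ?lam beta)) = int M"
      using card_skew_sz[OF lam b le2] sz_pl[OF u(1), of beta] by simp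
    then show ?thesis unfolding T_def using lam le le2 card_skew(1)[OF lam b] by simp
  qed
  have R: "(\<Sum>lam\<in>T. num_syt k n lam alpha * num_syt k n lam beta) = (Dn ^^ M) ((Up ^^ bb) v) beta"
  proof -
    have "(\<Sum>lam\<in>T. num_syt k n lam alpha * num_syt k n lam beta) =
        (\<Sum>lam\<in>T. \<Sum>u\<in>W M. if pl beta u = lam then (if pv beta u then (Up ^^ bb) v lam else 0) else 0)"
    proof (intro sum.cong refl)
      fix lam assume lT: "lam \<in> T"
      show "num_syt k n lam alpha * num_syt k n lam beta =
        (\<Sum>u\<in>W M. if pl beta u = lam then (if pv beta u then (Up ^^ bb) v lam else 0) else 0)"
        unfolding numT[OF lT] sum_distrib_left by (intro sum.cong refl) auto
    qed
    also have "\<dots> = (\<Sum>u\<in>W M. \<Sum>lam\<in>T. if pl beta u = lam then (if pv beta u then (Up ^^ bb) v lam else 0) else 0)"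
      by (rule sum.swap)
    also have "\<dots> = (\<Sum>u\<in>W M. if pl beta u \<in> T then (if pv beta u then (Up ^^ bb) v (pl beta u) else 0) else 0)"
      using finT by (simp only: sum.delta')
    also have "\<dots> = (\<Sum>u\<in>W M. if pv beta u then (Up ^^ bb) v (pl beta u) else 0)"
      using memT by (intro sum.cong refl) auto
    also have "\<dots> = (Dn ^^ M) ((Up ^^ bb) v) beta" by (rule Dn_pow[OF b, symmetric])
    finally show ?thesis .
  qed
  show ?thesis using L R DU_UD_pow[of M bb v] unfolding S_def T_def by simp
qed
end

theorem mainTheorem3:
  fixes k n m :: nat and alpha beta :: "int \<Rightarrow> int"
  assumes "1 \<le> k" and "k < n"
    and "cyl_partition k n alpha" and "cyl_partition k n beta"
  shows "(\<Sum>mu \<in> {mu. cyl_partition k n mu \<and> cyl_subseteq mu alpha \<and> cyl_subseteq mu beta \<and>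
                      finite (skew_boxes k n alpha mu) \<and> card (skew_boxes k n alpha mu) = m}.
            num_syt k n alpha mu * num_syt k n beta mu)
       = (\<Sum>lam \<in> {lam. cyl_partition k n lam \<and> cyl_subseteq alpha lam \<and> cyl_subseteq beta lam \<and>
                      finite (skew_boxes k n lam beta) \<and> card (skew_boxes k n lam beta) = m}.
            num_syt k n lam alpha * num_syt k n lam beta)"
proof -
  interpret cylk k n by unfold_locales (use assms in auto)
  show ?thesis by (rule main[OF assms(3,4)])
qed

end
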